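(* Let $\lambda>0$, $\lambda_{max}>0$, $p\in(0,1)$, let $B\ge1$ be an integer, and let $f_B:[0,1]\to\mathbb{R}$ be as defined in the context. For $q,\tilde q\in[0,1]$ let $\mathrm{TH}_B(q,\tilde q)=f_B(q)\exp\!\big(-\frac{\lambda f_B(\tilde q)}{\lambda_{max}}\big)$, and call $q^*\in[0,1]$ a symmetric Nash equilibrium (SNE) if $\mathrm{TH}_B(q^*,q^* )=\max_{q\in[0,1]}\mathrm{TH}_B(q,q^* )$. Then $q^*=1$ is an SNE. At any SNE $q^*$, $\mathrm{TH}_B(q^*,q^* )=p\exp\!\big(-\frac{p\lambda}{\lambda_{max}}\big)$ and the transmission capacity $C=\lambda\,\mathrm{TH}_B(q^*,q^* )$ equals $\lambda p\exp\!\big(-\frac{p\lambda}{\lambda_{max}}\big)$.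
   Context: For $q\in(0,1]$ define $r_B(q)$ by: if $B=1$, $r_1(q)=\frac{p}{p+q-pq}$; if $B>1$ and $q\ne p$, $r_B(q)=\frac{\frac{p}{q}(1-\rho^B)}{1-\frac{p}{q}\rho^B}$ with $\rho=\frac{p(1-q)}{q(1-p)}$; if $B>1$ and $q=p$, $r_B(p)=\frac{B}{B+1-p}$. Set $f_B(q)=q\,r_B(q)$ for $q\in(0,1]$ and $f_B(0)=0$. Interpretation: transmitters form a homogeneous Poisson point process of density $\lambda$ in $\mathbb{R}^2$, harvest one energy unit per slot with probability $p$ into a battery of capacity $B$, and transmit with their own ALOHA probability when the battery is nonempty; $\mathrm{TH}_B(q,\tilde q)$ is the throughput of a transmitter using $q$ when all others use $\tilde q$; $\lambda_{max}=\frac{1}{d^2\theta^{2/\alpha}\kappa(\alpha)}$, $\kappa(\alpha)=\frac{2\pi^2}{\alpha\sin(2\pi/\alpha)}$. *)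

theory Defs
  imports Complex_Main
begin

definition rB :: "nat \<Rightarrow> real \<Rightarrow> real \<Rightarrow> real" where
  "rB B p q =
    (if B = 1 then p / (p + q - p * q)
     else if q = p then real B / (real B + 1 - p)
     else (let \<rho> = p * (1 - q) / (q * (1 - p))
           in ((p / q) * (1 - \<rho> ^ B)) / (1 - (p / q) * \<rho> ^ B)))"

definition fB :: "nat \<Rightarrow> real \<Rightarrow> real \<Rightarrow> real" where
  "fB B p q = (if q = 0 then 0 else q * rB B p q)"

definition TH :: "nat \<Rightarrow> real \<Rightarrow> real \<Rightarrow> real \<Rightarrow> real \<Rightarrow> real \<Rightarrow> real" where
  "TH B p lam lmax q qt = fB B p q * exp (- (lam * fB B p qt / lmax))"

definition SNE :: "nat \<Rightarrow> real \<Rightarrow> real \<Rightarrow> real \<Rightarrow> real \<Rightarrow> bool" where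
  "SNE B p lam lmax qs \<longleftrightarrow> qs \<in> {0..1} \<and>
     (\<forall>q\<in>{0..1}. TH B p lam lmax q qs \<le> TH B p lam lmax qs qs)"

end

theory Submission
  imports Defs
begin

lemma ratio_le:
  fixes s r :: real
  assumes "(s < 1 \<and> 0 \<le> r \<and> r < 1) \<or> (s > 1 \<and> r > 1)" and "B \<ge> 1"
  shows "(1 - r ^ B) / (1 - s * r ^ B) \<le> 1"
proof (cases "s < 1")
  case True
  with assms have r: "0 \<le> r" "r < 1" by auto
  have "r ^ B \<le> 1" using r by (simp add: power_le_one)
  have "s * r ^ B \<le> r ^ B" proof -
    have "(1 - s) * r ^ B \<ge> 0" using True r by simp
    thus ?thesis by (simp add: algebra_simps)
  qed
  moreover have "s * r ^ B < 1"
  proof -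
    have "r ^ B < 1" using r assms(2) by (simp add: power_less_one_iff)
    thus ?thesis using \<open>s * r ^ B \<le> r ^ B\<close> by linarith
  qed
  ultimately show ?thesis by (simp add: divide_le_eq)
next
  case False
  with assms have s: "s > 1" and r: "r > 1" by auto
  have "r ^ B > 1" using r assms(2) by (simp add: one_less_power)
  hence "s * r ^ B > r ^ B" using s by simp
  moreover have "s * r ^ B > 1" using calculation \<open>r ^ B > 1\<close> by linarith
  ultimately show ?thesis using \<open>r ^ B > 1\<close> by (simp add: divide_le_eq)
qed

lemma fB_le:
  fixes p q :: real
  assumes "0 < p" "p < 1" "0 \<le> q" "q \<le> 1" "B \<ge> 1"
  shows "fB B p q \<le> p"
proof (cases "q = 0")
  case True thus ?thesis using assms by (simp add: fB_def)
next
  case q0: False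
  hence q: "q > 0" using assms by simp
  show ?thesis
  proof (cases "B = 1")
    case True
    have pq: "p * q \<le> p" using assms by (simp add: mult_left_le_one_le)
    have pq2: "p * q \<le> q" using assms by (simp add: mult_left_le_one_le mult.commute)
    have d: "p + q - p * q > 0" using pq2 assms by linarith
    have "q * p \<le> p * (p + q - p * q)"
    proof -
      have "p * (p + q - p * q) = q * p + p * (p - p * q)" by (simp add: algebra_simps)
      moreover have "p * (p - p * q) \<ge> 0" using pq assms by simp
      ultimately show ?thesis by linarith
    qed
    hence "q * (p / (p + q - p * q)) \<le> p" using d by (simp add: divide_le_eq mult.commute)
    thus ?thesis using True q0 by (simp add: fB_def rB_def)
  next
    case B1: False
    show ?thesis
    proof (cases "q = p")
      case True
      have "real B / (real B + 1 - p) \<le> 1" using assms by simp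
      hence "p * (real B / (real B + 1 - p)) \<le> p * 1" using assms by (intro mult_left_mono) auto
      thus ?thesis using True B1 q0 by (simp add: fB_def rB_def)
    next
      case qp: False
      define s where "s = p / q"
      define r where "r = p * (1 - q) / (q * (1 - p))"
      have cond: "(s < 1 \<and> 0 \<le> r \<and> r < 1) \<or> (s > 1 \<and> r > 1)"
      proof (cases "q > p")
        case True
        have "s < 1" using True q by (simp add: s_def)
        moreover have "0 \<le> r" using assms by (simp add: r_def)
        moreover have "r < 1"
        proof -
          have "p * (1 - q) < q * (1 - p)" using True by (simp add: algebra_simps)
          thus ?thesis using assms q by (simp add: r_def)
        qed
        ultimately show ?thesis by simp
      next
        case False
        hence lt: "q < p" using qp by simp
        have "s > 1" using lt q by (simp add: s_def)
        moreover have "r > 1"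
        proof -
          have "p * (1 - q) > q * (1 - p)" using lt by (simp add: algebra_simps)
          thus ?thesis using assms q by (simp add: r_def)
        qed
        ultimately show ?thesis by simp
      qed
      have "(1 - r ^ B) / (1 - s * r ^ B) \<le> 1" using ratio_le[OF cond assms(5)] .
      hence L: "p * ((1 - r ^ B) / (1 - s * r ^ B)) \<le> p * 1" using assms by (intro mult_left_mono) auto
      have "fB B p q = q * (s * (1 - r ^ B) / (1 - s * r ^ B))"
        using q0 B1 qp q by (simp add: fB_def rB_def s_def[symmetric] r_def[symmetric] Let_def)
      also have "q * (s * (1 - r ^ B) / (1 - s * r ^ B)) = p * ((1 - r ^ B) / (1 - s * r ^ B))"
        using q unfolding s_def by simp
      also have "\<dots> \<le> p" using L by simp
      finally show ?thesis .
    qed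
  qed
qed

lemma fB_one:
  assumes "0 < p" "p < 1" "B \<ge> 1"
  shows "fB B p 1 = p"
proof (cases "B = 1")
  case True thus ?thesis by (simp add: fB_def rB_def)
next
  case False
  hence "B \<noteq> 0" using assms by simp
  thus ?thesis using False assms by (simp add: fB_def rB_def Let_def zero_power)
qed

theorem theorem4:
  fixes lam lmax p :: real and B :: nat
  assumes "lam > 0" and "lmax > 0" and "0 < p" and "p < 1" and "B \<ge> 1"
  shows "SNE B p lam lmax 1 \<and>
    (\<forall>qs. SNE B p lam lmax qs \<longrightarrow>
       TH B p lam lmax qs qs = p * exp (- (p * lam / lmax)) \<and>
       lam * TH B p lam lmax qs qs = lam * p * exp (- (p * lam / lmax)))"
proof -
  have f1: "fB B p 1 = p" using fB_one assms by simp
  have le: "\<And>q. q \<in> {0..1} \<Longrightarrow> fB B p q \<le> p" using fB_le assms by auto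
  have A: "SNE B p lam lmax 1"
    unfolding SNE_def TH_def using le f1 by (auto intro: mult_right_mono)
  have B: "TH B p lam lmax qs qs = p * exp (- (p * lam / lmax))" if "SNE B p lam lmax qs" for qs
  proof -
    from that have qs: "qs \<in> {0..1}" and m: "TH B p lam lmax 1 qs \<le> TH B p lam lmax qs qs"
      unfolding SNE_def by auto
    have "p \<le> fB B p qs" using m f1 by (simp add: TH_def)
    with le[OF qs] have "fB B p qs = p" by simp
    thus ?thesis by (simp add: TH_def mult.commute)
  qed
  show ?thesis using A B by simp
qed

end
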